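(* There is a universal constant $C$ such that for every Borel set $A\subset[0,1]$ (with Lebesgue measure $|A|$): \[ \|G_{\mathbf{k}}\|_{L^1(A\times A)}\leq C\,\frac{|A|}{|\mathbf{k}|}\min\Big\{|A|,\frac{1}{|\mathbf{k}|}\Big\}\quad\text{for all }\mathbf{k}\neq\mathbf 0, \] and \[ \|G_{\mathbf{0}}\|_{L^1(A\times A)}\leq C\,|A|^2\,\frac{1}{|A|}\int_A\min\{z,1-z\}\,dz . \]
   Context: For $\mathbf{k}\in\mathbb{R}^2\setminus\{\mathbf 0\}$ and $z,z'\in[0,1]$, $G_{\mathbf{k}}(z,z')=\frac{\mathrm{csch}(|\mathbf{k}|)}{|\mathbf{k}|}\sinh(|\mathbf{k}|z)\sinh(|\mathbf{k}|(1-z'))$ if $z\le z'$ and $\frac{\mathrm{csch}(|\mathbf{k}|)}{|\mathbf{k}|}\sinh(|\mathbf{k}|z')\sinh(|\mathbf{k}|(1-z))$ if $z\ge z'$; $G_{\mathbf 0}(z,z')=z(1-z')$ if $z\le z'$ and $z'(1-z)$ if $z\ge z'$. These are the Green's functions of $-\frac{d^2}{dz^2}+|\mathbf{k}|^2$ on $[0,1]$ with zero Dirichlet conditions. *)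

theory Defs
  imports "HOL-Analysis.Analysis"
begin

text \<open>Green's function of -d^2/dz^2 + |k|^2 on [0,1] with zero Dirichlet conditions,
  for k in R^2. csch r = 1 / sinh r.\<close>
definition green :: "real^2 \<Rightarrow> real \<Rightarrow> real \<Rightarrow> real" where
  "green k z z' =
     (if k = 0 then (if z \<le> z' then z * (1 - z') else z' * (1 - z))
      else (let r = norm k in
            if z \<le> z' then (1 / sinh r) / r * sinh (r * z) * sinh (r * (1 - z'))
            else (1 / sinh r) / r * sinh (r * z') * sinh (r * (1 - z))))"

definition green_L1 :: "real^2 \<Rightarrow> real set \<Rightarrow> ennreal" where
  "green_L1 k A = (\<integral>\<^sup>+ p. indicator (A \<times> A) p * ennreal \<bar>green k (fst p) (snd p)\<bar>
                      \<partial>(lborel \<Otimes>\<^sub>M lborel))"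

end

theory Submission
  imports Defs "HOL-Probability.Distributions"
begin

lemma sinh_bound:
  fixes a b c :: real assumes "0 \<le> a" "0 \<le> b" "0 \<le> c"
  shows "2 * sinh a * sinh b * exp c \<le> sinh (a + b + c)"
proof -
  have sa: "0 \<le> sinh a" "0 \<le> sinh b" "0 \<le> sinh c" "0 \<le> sinh (a+b)" using assms by auto
  have "sinh a * sinh b \<le> sinh a * cosh b"
    using sinh_le_cosh_real[of b] sa by (intro mult_left_mono) auto
  moreover have "sinh a * sinh b \<le> cosh a * sinh b"
    using sinh_le_cosh_real[of a] sa by (intro mult_right_mono) auto
  ultimately have h1: "2 * sinh a * sinh b \<le> sinh (a + b)"
    using sinh_add[of a b] by linarith
  have "sinh (a+b) * exp c = sinh (a+b) * cosh c + sinh (a+b) * sinh c"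
    by (simp only: cosh_plus_sinh[symmetric] distrib_left)
  also have "\<dots> \<le> sinh (a+b) * cosh c + cosh (a+b) * sinh c"
    using sinh_le_cosh_real[of "a+b"] sa by (simp add: mult_right_mono)
  also have "\<dots> = sinh (a + b + c)" using sinh_add[of "a+b" c] by simp
  finally have "sinh (a+b) * exp c \<le> sinh (a+b+c)" .
  moreover have "2 * sinh a * sinh b * exp c \<le> sinh (a+b) * exp c"
    using h1 by (simp add: mult_right_mono)
  ultimately show ?thesis by linarith
qed

lemma green_bound:
  assumes k: "k \<noteq> 0" and z: "z \<in> {0..1}" and z': "z' \<in> {0..1}"
  shows "\<bar>green k z z'\<bar> \<le> exp (- norm k * \<bar>z - z'\<bar>) / (2 * norm k)"
proof -
  define r where "r = norm k"
  have r: "r > 0" using k by (simp add: r_def)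
  have sr: "sinh r > 0" using r by simp
  have key: "\<bar>sinh (r*x) * sinh (r*(1-y)) / sinh r / r\<bar> \<le> exp (- r * \<bar>x - y\<bar>) / (2*r)"
    if "0 \<le> x" "x \<le> y" "y \<le> 1" for x y
  proof -
    have nn: "0 \<le> sinh (r*x)" "0 \<le> sinh (r*(1-y))" using that r by auto
    have "2 * sinh (r*x) * sinh (r*(1-y)) * exp (r*(y-x)) \<le> sinh (r*x + r*(1-y) + r*(y-x))"
      by (rule sinh_bound) (use that r in auto)
    also have "r*x + r*(1-y) + r*(y-x) = r" by (simp add: algebra_simps)
    finally have i: "2 * sinh (r*x) * sinh (r*(1-y)) * exp (r*(y-x)) \<le> sinh r" .
    have e: "exp (- r * \<bar>x - y\<bar>) = inverse (exp (r*(y-x)))"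
      using that by (simp add: exp_minus[symmetric] abs_if algebra_simps)
    have "sinh (r*x) * sinh (r*(1-y)) \<le> sinh r * exp (- r * \<bar>x - y\<bar>) / 2"
      using i unfolding e by (simp add: field_simps)
    then show ?thesis using nn sr r by (simp add: field_simps abs_of_nonneg)
  qed
  show ?thesis
  proof (cases "z \<le> z'")
    case True
    have "green k z z' = sinh (r*z) * sinh (r*(1-z')) / sinh r / r"
      using k True by (simp add: green_def r_def Let_def)
    then show ?thesis using key[of z z'] True z z' by (simp add: r_def)
  next
    case False
    have "green k z z' = sinh (r*z') * sinh (r*(1-z)) / sinh r / r"
      using k False by (simp add: green_def r_def Let_def)
    then show ?thesis using key[of z' z] False z z' by (simp add: r_def abs_minus_commute)
  qed
qed

lemma green0_bound:
  assumes z: "z \<in> {0..1}" and z': "z' \<in> {0..1}"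
  shows "\<bar>green 0 z z'\<bar> \<le> min z (1 - z)"
proof (cases "z \<le> z'")
  case True
  have "z * (1 - z') \<le> z * 1" using z z' by (intro mult_left_mono) auto
  moreover have "z * (1 - z') \<le> 1 * (1 - z')" using z z' by (intro mult_right_mono) auto
  moreover have "0 \<le> z * (1 - z')" using z z' by auto
  ultimately show ?thesis using True z z' by (simp add: green_def)
next
  case False
  have "z' * (1 - z) \<le> z' * 1" using z z' by (intro mult_left_mono) auto
  moreover have "z' * (1 - z) \<le> 1 * (1 - z)" using z z' by (intro mult_right_mono) auto
  moreover have "0 \<le> z' * (1 - z)" using z z' by auto
  ultimately show ?thesis using False z z' by (simp add: green_def)
qed

lemma exp_half_line:
  assumes r: "0 < (r::real)"
  shows "(\<integral>\<^sup>+ u. ennreal (exp (- r * u) * indicator {0..} u) \<partial>lborel) = ennreal (1 / r)"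
proof -
  have "(\<integral>\<^sup>+ u. ennreal (exp (- r * u) * indicator {0..} u) \<partial>lborel)
      = (\<integral>\<^sup>+ u. ennreal (1/r) * ennreal (erlang_density 0 r u) \<partial>lborel)"
    using r by (intro nn_integral_cong) (auto simp: erlang_density_def indicator_def simp flip: ennreal_mult)
  also have "\<dots> = ennreal (1/r) * (\<integral>\<^sup>+ u. ennreal (erlang_density 0 r u) \<partial>lborel)"
    by (rule nn_integral_cmult) (simp add: borel_measurable_erlang_density)
  also have "(\<integral>\<^sup>+ u. ennreal (erlang_density 0 r u) \<partial>lborel) = 1"
    using nn_integral_erlang_ith_moment[OF r, of 0 0] by simp
  finally show ?thesis by simp
qed

lemma exp_abs_line:
  assumes r: "0 < (r::real)"
  shows "(\<integral>\<^sup>+ y. ennreal (exp (- r * \<bar>x - y\<bar>)) \<partial>lborel) \<le> ennreal (2 / r)"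
proof -
  have "(\<integral>\<^sup>+ y. ennreal (exp (- r * \<bar>x - y\<bar>)) \<partial>lborel)
     = ennreal \<bar>-1\<bar> * (\<integral>\<^sup>+ u. ennreal (exp (- r * \<bar>x - (x + -1 * u)\<bar>)) \<partial>lborel)"
    by (rule nn_integral_real_affine) auto
  also have "\<dots> = (\<integral>\<^sup>+ u. ennreal (exp (- r * \<bar>u\<bar>)) \<partial>lborel)" by simp
  also have "\<dots> \<le> (\<integral>\<^sup>+ u. ennreal (exp (- r * u) * indicator {0..} u)
                        + ennreal (exp (- r * (-u)) * indicator {0..} (-u)) \<partial>lborel)"
    by (intro nn_integral_mono) (auto simp: indicator_def simp flip: ennreal_plus)
  also have "\<dots> = (\<integral>\<^sup>+ u. ennreal (exp (- r * u) * indicator {0..} u) \<partial>lborel)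
                   + (\<integral>\<^sup>+ u. ennreal (exp (- r * (-u)) * indicator {0..} (-u)) \<partial>lborel)"
    by (rule nn_integral_add) auto
  also have eq2: "(\<integral>\<^sup>+ u. ennreal (exp (- r * (-u)) * indicator {0..} (-u)) \<partial>lborel) = ennreal (1/r)"
  proof -
    have "(\<integral>\<^sup>+ u. ennreal (exp (- r * u) * indicator {0..} u) \<partial>lborel)
     = ennreal \<bar>-1\<bar> * (\<integral>\<^sup>+ u. ennreal (exp (- r * (0 + -1 * u)) * indicator {0..} (0 + -1 * u)) \<partial>lborel)"
      by (rule nn_integral_real_affine) auto
    then show ?thesis using exp_half_line[OF r] by simp
  qed
  also have "(\<integral>\<^sup>+ u. ennreal (exp (- r * u) * indicator {0..} u) \<partial>lborel) + ennreal (1/r) = ennreal (2/r)"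
    unfolding exp_half_line[OF r] using r by (simp flip: ennreal_plus)
  finally show ?thesis .
qed

lemma measA:
  fixes A :: "real set"
  assumes A: "A \<in> sets borel" "A \<subseteq> {0..1}"
  shows "emeasure lborel A = ennreal (measure lborel A)"
proof -
  have "emeasure lborel A \<le> emeasure lborel {0..1::real}"
    using A(2) by (rule emeasure_mono) simp
  then have "emeasure lborel A \<noteq> \<infinity>" by (auto simp: top_unique)
  then show ?thesis by (simp add: emeasure_eq_ennreal_measure)
qed

lemma part1:
  assumes A: "A \<in> sets borel" "A \<subseteq> {0..1}" and k: "k \<noteq> 0"
  shows "green_L1 k A \<le> ennreal ((measure lborel A)^2 / (2 * norm k))"
proof -
  define r where "r = norm k"
  have r: "r > 0" using k by (simp add: r_def)
  have "green_L1 k A \<le> (\<integral>\<^sup>+ p. ennreal (1 / (2*r)) * indicator (A \<times> A) p \<partial>(lborel \<Otimes>\<^sub>M lborel))"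
    unfolding green_L1_def
  proof (intro nn_integral_mono)
    fix p :: "real \<times> real"
    show "indicator (A \<times> A) p * ennreal \<bar>green k (fst p) (snd p)\<bar> \<le> ennreal (1 / (2*r)) * indicator (A \<times> A) p"
    proof (cases "p \<in> A \<times> A")
      case True
      then have "fst p \<in> {0..1}" "snd p \<in> {0..1}" using A by (auto simp: mem_Times_iff)
      from green_bound[OF k this] have "\<bar>green k (fst p) (snd p)\<bar> \<le> exp (- r * \<bar>fst p - snd p\<bar>) / (2 * r)"
        by (simp add: r_def)
      also have "\<dots> \<le> 1 / (2*r)" using r by (intro divide_right_mono) auto
      finally show ?thesis using True by (simp add: ennreal_leI)
    qed simp
  qed
  also have "\<dots> = ennreal (1 / (2*r)) * emeasure (lborel \<Otimes>\<^sub>M lborel) (A \<times> A)"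
    using A by (intro nn_integral_cmult_indicator) auto
  also have "emeasure (lborel \<Otimes>\<^sub>M lborel) (A \<times> A) = emeasure lborel A * emeasure lborel A"
    using A by (intro lborel.emeasure_pair_measure_Times) auto
  also have "ennreal (1 / (2*r)) * (emeasure lborel A * emeasure lborel A) = ennreal ((measure lborel A)^2 / (2 * norm k))"
    using r by (simp add: measA[OF A] r_def power2_eq_square flip: ennreal_mult)
  finally show ?thesis .
qed

lemma part2:
  assumes A: "A \<in> sets borel" "A \<subseteq> {0..1}" and k: "k \<noteq> 0"
  shows "green_L1 k A \<le> ennreal (measure lborel A / (norm k)^2)"
proof -
  define r where "r = norm k"
  have r: "r > 0" using k by (simp add: r_def)
  define f where "f = (\<lambda>p::real\<times>real. indicator A (fst p) * ennreal (exp (- r * \<bar>fst p - snd p\<bar>) / (2*r)))"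
  have fm: "f \<in> borel_measurable (lborel \<Otimes>\<^sub>M lborel)"
    unfolding f_def using A by measurable
  have "green_L1 k A \<le> (\<integral>\<^sup>+ p. f p \<partial>(lborel \<Otimes>\<^sub>M lborel))"
    unfolding green_L1_def
  proof (intro nn_integral_mono)
    fix p :: "real \<times> real"
    show "indicator (A \<times> A) p * ennreal \<bar>green k (fst p) (snd p)\<bar> \<le> f p"
    proof (cases "p \<in> A \<times> A")
      case True
      then have "fst p \<in> {0..1}" "snd p \<in> {0..1}" using A by (auto simp: mem_Times_iff)
      from green_bound[OF k this] have "\<bar>green k (fst p) (snd p)\<bar> \<le> exp (- r * \<bar>fst p - snd p\<bar>) / (2 * r)"
        by (simp add: r_def)
      then show ?thesis using True by (simp add: ennreal_leI f_def mem_Times_iff)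
    qed (simp add: f_def)
  qed
  also have "\<dots> = (\<integral>\<^sup>+ x. \<integral>\<^sup>+ y. f (x, y) \<partial>lborel \<partial>lborel)"
    by (rule lborel.nn_integral_fst[OF fm, symmetric])
  also have "\<dots> \<le> (\<integral>\<^sup>+ x. ennreal (1 / r^2) * indicator A x \<partial>lborel)"
  proof (intro nn_integral_mono)
    fix x :: real
    have eq: "(\<integral>\<^sup>+ y. f (x, y) \<partial>lborel) = indicator A x * (\<integral>\<^sup>+ y. ennreal (1/(2*r)) * ennreal (exp (- r * \<bar>x - y\<bar>)) \<partial>lborel)"
    proof -
      have fx: "f (x,y) = indicator A x * (ennreal (1/(2*r)) * ennreal (exp (- r * \<bar>x - y\<bar>)))" for y
        unfolding f_def by (subst ennreal_mult[symmetric]) (use r in auto)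
      show ?thesis unfolding fx by (rule nn_integral_cmult) auto
    qed
    have "(\<integral>\<^sup>+ y. ennreal (1/(2*r)) * ennreal (exp (- r * \<bar>x - y\<bar>)) \<partial>lborel)
        = ennreal (1/(2*r)) * (\<integral>\<^sup>+ y. ennreal (exp (- r * \<bar>x - y\<bar>)) \<partial>lborel)"
      by (rule nn_integral_cmult) auto
    also have "\<dots> \<le> ennreal (1/(2*r)) * ennreal (2/r)"
      by (intro mult_left_mono exp_abs_line r) auto
    also have "\<dots> = ennreal (1 / r^2)" using r by (simp add: power2_eq_square flip: ennreal_mult)
    finally have le: "(\<integral>\<^sup>+ y. ennreal (1/(2*r)) * ennreal (exp (- r * \<bar>x - y\<bar>)) \<partial>lborel) \<le> ennreal (1 / r^2)" .
    show "(\<integral>\<^sup>+ y. f (x, y) \<partial>lborel) \<le> ennreal (1 / r^2) * indicator A x"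
    proof (cases "x \<in> A")
      case True
      then show ?thesis using le unfolding eq by simp
    next
      case False
      then show ?thesis unfolding eq by simp
    qed
  qed
  also have "\<dots> = ennreal (1 / r^2) * emeasure lborel A"
    using A by (intro nn_integral_cmult_indicator) auto
  also have "\<dots> = ennreal (measure lborel A / (norm k)^2)"
    using r by (simp add: measA[OF A] r_def flip: ennreal_mult)
  finally show ?thesis .
qed

lemma part0:
  assumes A: "A \<in> sets borel" "A \<subseteq> {0..1}"
  shows "green_L1 0 A \<le> ennreal (measure lborel A * (LINT z:A|lborel. min z (1 - z)))"
proof -
  define m where "m = (\<lambda>z::real. indicator A z * min z (1 - z))"
  define f where "f = (\<lambda>p::real\<times>real. indicator A (snd p) * ennreal (m (fst p)))"
  have fm: "f \<in> borel_measurable (lborel \<Otimes>\<^sub>M lborel)"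
    unfolding f_def m_def using A by measurable
  have "green_L1 0 A \<le> (\<integral>\<^sup>+ p. f p \<partial>(lborel \<Otimes>\<^sub>M lborel))"
    unfolding green_L1_def
  proof (intro nn_integral_mono)
    fix p :: "real \<times> real"
    show "indicator (A \<times> A) p * ennreal \<bar>green 0 (fst p) (snd p)\<bar> \<le> f p"
    proof (cases "p \<in> A \<times> A")
      case True
      then have "fst p \<in> {0..1}" "snd p \<in> {0..1}" using A by (auto simp: mem_Times_iff)
      from green0_bound[OF this] show ?thesis using True by (simp add: ennreal_leI f_def m_def mem_Times_iff)
    qed (simp add: f_def)
  qed
  also have "\<dots> = (\<integral>\<^sup>+ x. \<integral>\<^sup>+ y. f (x, y) \<partial>lborel \<partial>lborel)"
    by (rule lborel.nn_integral_fst[OF fm, symmetric])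
  also have "\<dots> = (\<integral>\<^sup>+ x. ennreal (m x) * emeasure lborel A \<partial>lborel)"
  proof (intro nn_integral_cong)
    fix x :: real
    show "(\<integral>\<^sup>+ y. f (x, y) \<partial>lborel) = ennreal (m x) * emeasure lborel A"
      unfolding f_def using A by (simp add: nn_integral_cmult_indicator mult.commute)
  qed
  also have "\<dots> = (\<integral>\<^sup>+ x. ennreal (m x) \<partial>lborel) * emeasure lborel A"
    by (rule nn_integral_multc) (unfold m_def, use A in measurable)
  also have "(\<integral>\<^sup>+ x. ennreal (m x) \<partial>lborel) = ennreal (LINT z:A|lborel. min z (1 - z))"
  proof -
    have mm: "m \<in> borel_measurable lborel" unfolding m_def using A by measurable
    have nn: "0 \<le> m x" for x
    proof -
      have "x \<in> A \<Longrightarrow> 0 \<le> x \<and> x \<le> 1" using A(2) by auto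
      then show ?thesis by (cases "x \<in> A") (auto simp: m_def indicator_def)
    qed
    have "(\<integral>\<^sup>+ x. ennreal (m x) \<partial>lborel) \<le> (\<integral>\<^sup>+ x. ennreal (indicator {0..1::real} x) \<partial>lborel)"
    proof (rule nn_integral_mono)
      fix x :: real
      have "x \<in> A \<Longrightarrow> 0 \<le> x \<and> x \<le> 1" using A(2) by auto
      then show "ennreal (m x) \<le> ennreal (indicator {0..1} x)"
        by (cases "x \<in> A") (auto simp: m_def indicator_def)
    qed
    also have "\<dots> = 1" by (simp add: ennreal_indicator)
    finally have le1: "(\<integral>\<^sup>+ x. ennreal (m x) \<partial>lborel) \<le> 1" .
    have one: "(1::ennreal) < \<infinity>" by simp
    have "(\<integral>\<^sup>+ x. ennreal (m x) \<partial>lborel) < \<infinity>"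
      using le1 one by (rule order.strict_trans1)
    then have "integrable lborel m" using mm nn by (intro integrableI_nonneg) auto
    then have "(\<integral>\<^sup>+ x. ennreal (m x) \<partial>lborel) = ennreal (integral\<^sup>L lborel m)"
      using nn by (intro nn_integral_eq_integral) auto
    also have "integral\<^sup>L lborel m = (LINT z:A|lborel. min z (1 - z))"
      by (simp add: m_def set_lebesgue_integral_def)
    finally show ?thesis .
  qed
  also have "ennreal (LINT z:A|lborel. min z (1 - z)) * emeasure lborel A
      = ennreal (measure lborel A * (LINT z:A|lborel. min z (1 - z)))"
    by (simp add: measA[OF A] ennreal_mult' mult.commute)
  finally show ?thesis .
qed

theorem lemma3p3:
  shows "\<exists>C::real. \<forall>A::real set. A \<in> sets borel \<and> A \<subseteq> {0..1} \<longrightarrow>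
     (\<forall>k::real^2. k \<noteq> 0 \<longrightarrow>
        green_L1 k A \<le> ennreal (C * (measure lborel A / norm k)
                                   * min (measure lborel A) (1 / norm k)))
   \<and> green_L1 0 A \<le> ennreal (C * (measure lborel A)\<^sup>2 * (1 / measure lborel A)
                              * (LINT z:A|lborel. min z (1 - z)))"
proof (intro exI[of _ 1] allI impI conjI)
  fix A :: "real set" assume H: "A \<in> sets borel \<and> A \<subseteq> {0..1}"
  then have A: "A \<in> sets borel" "A \<subseteq> {0..1}" by auto
  define \<mu> where "\<mu> = measure lborel A"
  have mu: "\<mu> \<ge> 0" by (simp add: \<mu>_def)
  {
    fix k :: "real^2" assume k: "k \<noteq> 0"
    define r where "r = norm k"
    have r: "r > 0" using k by (simp add: r_def)
    show "green_L1 k A \<le> ennreal (1 * (measure lborel A / norm k) * min (measure lborel A) (1 / norm k))"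
    proof (cases "\<mu> \<le> 1 / r")
      case True
      have "\<mu>^2 / (2*r) \<le> 1 * (\<mu> / r) * min \<mu> (1/r)"
        using True r mu by (simp add: min_def power2_eq_square divide_simps)
      then show ?thesis using part1[OF A k] unfolding \<mu>_def r_def
        by (meson ennreal_leI order_trans)
    next
      case False
      have "\<mu> / r^2 \<le> 1 * (\<mu> / r) * min \<mu> (1/r)"
        using False r mu by (simp add: min_def power2_eq_square divide_simps)
      then show ?thesis using part2[OF A k] unfolding \<mu>_def r_def
        by (meson ennreal_leI order_trans)
    qed
  }
  define L where "L = (LINT z:A|lborel. min z (1 - z))"
  have "\<mu> * L \<le> 1 * \<mu>^2 * (1 / \<mu>) * L"
    by (cases "\<mu> = 0") (auto simp: power2_eq_square)
  then show "green_L1 0 A \<le> ennreal (1 * (measure lborel A)\<^sup>2 * (1 / measure lborel A) * (LINT z:A|lborel. min z (1 - z)))"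
    using part0[OF A] unfolding \<mu>_def L_def by (meson ennreal_leI order_trans)
qed

end
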